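(* Let $A\subset[0,1]$ be a measurable set with $|A|<1$. Then there exist pairwise disjoint sets $Z_j\subset\mathbb{Z}$, $j\in\mathbb{N}$, such that for every $j$ the exponential system $\{e^{-2\pi i n t}: n\in Z_j\}$ is complete in $L^2(A)$.
   Context: $|A|$ denotes Lebesgue measure. A system of functions is complete in $L^2(A)$ if its linear span is dense in $L^2(A)$. *)

theory Defs
  imports "HOL-Analysis.Analysis"
begin

definition expo :: "int \<Rightarrow> real \<Rightarrow> complex" where
  "expo n t = exp (- 2 * of_real pi * \<i> * of_int n * of_real t)"

definition complete_L2 :: "real set \<Rightarrow> int set \<Rightarrow> bool" where
  "complete_L2 A Z \<longleftrightarrow>
    (\<forall>f :: real \<Rightarrow> complex.
       f \<in> borel_measurable (restrict_space lebesgue A) \<and>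
       (\<integral>\<^sup>+ t. ennreal ((cmod (f t))\<^sup>2) \<partial>(restrict_space lebesgue A)) < \<infinity> \<longrightarrow>
       (\<forall>\<epsilon>>0. \<exists>F c. finite F \<and> F \<subseteq> Z \<and>
          (\<integral>\<^sup>+ t. ennreal ((cmod (f t - (\<Sum>n\<in>F. c n * expo n t)))\<^sup>2)
              \<partial>(restrict_space lebesgue A)) < ennreal \<epsilon>))"

end

theory Submission
  imports Defs "HOL-Computational_Algebra.Polynomial"
begin

lemma expo_mult: "expo a t * expo b t = expo (a + b) t"
  unfolding expo_def by (simp add: exp_add[symmetric] algebra_simps)

lemma norm_expo [simp]: "cmod (expo n t) = 1"
  unfolding expo_def by (simp add: norm_exp_eq_Re)

lemma cnj_expo: "cnj (expo n t) = expo (- n) t"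
  unfolding expo_def by (simp add: exp_cnj)

lemma expo_0 [simp]: "expo 0 t = 1"
  unfolding expo_def by simp

lemma continuous_expo [continuous_intros]: "continuous_on S (expo n)"
  unfolding expo_def by (intro continuous_intros)

definition tp :: "int set \<Rightarrow> (real \<Rightarrow> complex) \<Rightarrow> bool" where
  "tp S f \<longleftrightarrow> (\<exists>F c. finite F \<and> F \<subseteq> S \<and> f = (\<lambda>t. \<Sum>n\<in>F. c n * expo n t))"

lemma tp_expo: "n \<in> S \<Longrightarrow> tp S (expo n)"
  unfolding tp_def by (rule exI[of _ "{n}"], rule exI[of _ "\<lambda>_. 1"]) auto

lemma tp_zero: "tp S (\<lambda>t. 0)"
  unfolding tp_def by (rule exI[of _ "{}"]) auto

lemma tp_add:
  assumes "tp S f" "tp S g" shows "tp S (\<lambda>t. f t + g t)"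
proof -
  obtain F c where F: "finite F" "F \<subseteq> S" "f = (\<lambda>t. \<Sum>n\<in>F. c n * expo n t)" using assms(1) tp_def by auto
  obtain G d where G: "finite G" "G \<subseteq> S" "g = (\<lambda>t. \<Sum>n\<in>G. d n * expo n t)" using assms(2) tp_def by auto
  define e where "e n = (if n \<in> F then c n else 0) + (if n \<in> G then d n else 0)" for n
  have "(\<lambda>t. f t + g t) = (\<lambda>t. \<Sum>n\<in>F \<union> G. e n * expo n t)"
  proof
    fix t
    have 1: "(\<Sum>n\<in>F \<union> G. (if n \<in> F then c n else 0) * expo n t) = (\<Sum>n\<in>F. c n * expo n t)"
      by (rule sum.mono_neutral_cong_right) (use F G in auto)
    have 2: "(\<Sum>n\<in>F \<union> G. (if n \<in> G then d n else 0) * expo n t) = (\<Sum>n\<in>G. d n * expo n t)"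
      by (rule sum.mono_neutral_cong_right) (use F G in auto)
    show "f t + g t = (\<Sum>n\<in>F \<union> G. e n * expo n t)"
      unfolding e_def distrib_right sum.distrib 1 2 using F G by simp
  qed
  then show ?thesis unfolding tp_def using F(1,2) G(1,2) by (intro exI[of _ "F \<union> G"] exI[of _ e]) simp
qed

lemma tp_scale:
  assumes "tp S f" shows "tp S (\<lambda>t. a * f t)"
proof -
  obtain F c where F: "finite F" "F \<subseteq> S" "f = (\<lambda>t. \<Sum>n\<in>F. c n * expo n t)" using assms(1) tp_def by auto
  have "(\<lambda>t. a * f t) = (\<lambda>t. \<Sum>n\<in>F. (a * c n) * expo n t)"
    unfolding F(3) by (rule ext) (simp add: sum_distrib_left mult.assoc)
  then show ?thesis unfolding tp_def using F(1,2) by (intro exI[of _ F] exI[of _ "\<lambda>n. a * c n"]) simp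
qed

lemma tp_sum:
  assumes "finite I" "\<And>i. i \<in> I \<Longrightarrow> tp S (f i)" shows "tp S (\<lambda>t. \<Sum>i\<in>I. f i t)"
  using assms by (induction I rule: finite_induct) (auto intro: tp_zero tp_add)

lemma tp_mono: "tp S f \<Longrightarrow> S \<subseteq> T \<Longrightarrow> tp T f"
  unfolding tp_def by blast

lemma tp_mult:
  assumes "tp UNIV f" "tp UNIV g" shows "tp UNIV (\<lambda>t. f t * g t)"
proof -
  obtain F c where F: "finite F" "f = (\<lambda>t. \<Sum>n\<in>F. c n * expo n t)" using assms(1) tp_def by auto
  obtain G d where G: "finite G" "g = (\<lambda>t. \<Sum>n\<in>G. d n * expo n t)" using assms(2) tp_def by auto
  have "(\<lambda>t. f t * g t) = (\<lambda>t. \<Sum>a\<in>F. \<Sum>b\<in>G. (c a * d b) * expo (a + b) t)"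
    unfolding F G by (rule ext) (simp add: sum_product expo_mult[symmetric] algebra_simps)
  moreover have "tp UNIV (\<lambda>t. \<Sum>a\<in>F. \<Sum>b\<in>G. (c a * d b) * expo (a + b) t)"
    by (intro tp_sum tp_scale tp_expo F G) auto
  ultimately show ?thesis by simp
qed

lemma tp_cont: "tp S f \<Longrightarrow> continuous_on X f"
  unfolding tp_def by (auto intro!: continuous_intros)

lemma tp_bounded: "tp S f \<Longrightarrow> \<exists>C. \<forall>t. cmod (f t) \<le> C"
proof -
  assume "tp S f"
  then obtain F c where F: "finite F" "f = (\<lambda>t. \<Sum>n\<in>F. c n * expo n t)" using tp_def by auto
  have "cmod (f t) \<le> (\<Sum>n\<in>F. cmod (c n))" for t
    unfolding F by (rule order_trans[OF norm_sum]) (simp add: norm_mult)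
  then show ?thesis by blast
qed

lemma expo_sphere: "expo n t \<in> sphere 0 1"
  by simp

lemma alg: "(u + w) / 2 * a + (u - w) / (2 * \<i>) * b = (a/2 + b/(2*\<i>)) * u + (a/2 - b/(2*\<i>)) * (w::complex)"
  by (simp add: field_simps)

lemma re_im_scale: "Re z *\<^sub>R 1 + Im z *\<^sub>R \<i> = z" by (simp add: complex_eq_iff)

lemma rpf_tp:
  assumes "real_polynomial_function p"
  shows "tp UNIV (\<lambda>t. complex_of_real (p (expo (-1) t)))"
  using assms
proof induction
  case (linear p)
  have lin: "p z = Re z * p 1 + Im z * p \<i>" for z
  proof -
    have "p (Re z *\<^sub>R 1 + Im z *\<^sub>R \<i>) = Re z * p 1 + Im z * p \<i>"
      using linear by (simp only: linear_simps real_scaleR_def)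
    then show ?thesis by (simp only: re_im_scale)
  qed
  have re: "complex_of_real (Re z) = (z + cnj z) / 2" for z
    by (simp add: complex_eq_iff)
  have im: "complex_of_real (Im z) = (z - cnj z) / (2 * \<i>)" for z
    by (simp add: complex_eq_iff)
  have "(\<lambda>t. complex_of_real (p (expo (-1) t))) =
        (\<lambda>t. (of_real (p 1) / 2 + of_real (p \<i>) / (2 * \<i>)) * expo (-1) t
            + (of_real (p 1) / 2 - of_real (p \<i>) / (2 * \<i>)) * expo 1 t)"
  proof
    fix t
    show "complex_of_real (p (expo (-1) t)) = (of_real (p 1) / 2 + of_real (p \<i>) / (2 * \<i>)) * expo (-1) t
            + (of_real (p 1) / 2 - of_real (p \<i>) / (2 * \<i>)) * expo 1 t"
      unfolding lin[of "expo (-1) t"] of_real_add of_real_mult re im cnj_expo minus_minus by (rule alg)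
  qed
  moreover have "tp UNIV (\<lambda>t. (of_real (p 1) / 2 + of_real (p \<i>) / (2 * \<i>)) * expo (-1) t
            + (of_real (p 1) / 2 - of_real (p \<i>) / (2 * \<i>)) * expo 1 t)"
    by (intro tp_add tp_scale tp_expo) auto
  ultimately show ?case by simp
next
  case (const c)
  have "(\<lambda>t. complex_of_real c) = (\<lambda>t. of_real c * expo 0 t)" by simp
  then show ?case using tp_scale[OF tp_expo[of 0 UNIV], of "of_real c"] by simp
next
  case (add f g)
  show ?case using tp_add[OF add.IH] by simp
next
  case (mult f g)
  show ?case using tp_mult[OF mult.IH] by simp
qed

lemma circ_unif:
  fixes G :: "complex \<Rightarrow> real"
  assumes "continuous_on (sphere 0 1) G" "\<epsilon> > 0"
  shows "\<exists>P. tp UNIV P \<and> (\<forall>t. cmod (of_real (G (expo (-1) t)) - P t) < \<epsilon>)"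
proof -
  obtain g where g: "polynomial_function g" "\<forall>x\<in>sphere 0 1. norm (G x - g x) < \<epsilon>"
    using Stone_Weierstrass_polynomial_function[OF compact_sphere assms] by blast
  have "tp UNIV (\<lambda>t. complex_of_real (g (expo (-1) t)))"
    using rpf_tp g(1) by (simp add: real_polynomial_function_eq)
  moreover have "cmod (of_real (G (expo (-1) t)) - of_real (g (expo (-1) t))) < \<epsilon>" for t
    using g(2) expo_sphere[of "-1" t] by (simp flip: of_real_diff)
  ultimately show ?thesis by blast
qed

definition d :: "real measure \<Rightarrow> (real \<Rightarrow> complex) \<Rightarrow> (real \<Rightarrow> complex) \<Rightarrow> ennreal" where
  "d M f g = (\<integral>\<^sup>+t. ennreal ((cmod (f t - g t))\<^sup>2) \<partial>M)"

lemma sq_ineq: "(cmod (u + v))\<^sup>2 \<le> 2 * (cmod u)\<^sup>2 + 2 * (cmod v)\<^sup>2"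
proof -
  have "cmod (u + v) \<le> cmod u + cmod v" by (rule norm_triangle_ineq)
  then have "(cmod (u + v))\<^sup>2 \<le> (cmod u + cmod v)\<^sup>2" by (simp add: power_mono)
  also have "\<dots> \<le> 2 * (cmod u)\<^sup>2 + 2 * (cmod v)\<^sup>2"
  proof -
    have "0 \<le> (cmod u - cmod v)\<^sup>2" by simp
    then show ?thesis by (simp add: power2_eq_square algebra_simps)
  qed
  finally show ?thesis .
qed

lemma sq_int_add:
  assumes [measurable]: "u \<in> borel_measurable M" "v \<in> borel_measurable M"
  shows "(\<integral>\<^sup>+t. ennreal ((cmod (u t + v t))\<^sup>2) \<partial>M) \<le>
     2 * (\<integral>\<^sup>+t. ennreal ((cmod (u t))\<^sup>2) \<partial>M) + 2 * (\<integral>\<^sup>+t. ennreal ((cmod (v t))\<^sup>2) \<partial>M)"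
proof -
  have "(\<integral>\<^sup>+t. ennreal ((cmod (u t + v t))\<^sup>2) \<partial>M) \<le>
        (\<integral>\<^sup>+t. 2 * ennreal ((cmod (u t))\<^sup>2) + 2 * ennreal ((cmod (v t))\<^sup>2) \<partial>M)"
  proof (rule nn_integral_mono)
    fix t
    have "ennreal ((cmod (u t + v t))\<^sup>2) \<le> ennreal (2 * (cmod (u t))\<^sup>2 + 2 * (cmod (v t))\<^sup>2)"
      using sq_ineq by (rule ennreal_leI)
    also have "\<dots> = 2 * ennreal ((cmod (u t))\<^sup>2) + 2 * ennreal ((cmod (v t))\<^sup>2)"
      by (simp add: ennreal_plus ennreal_mult)
    finally show "ennreal ((cmod (u t + v t))\<^sup>2) \<le> 2 * ennreal ((cmod (u t))\<^sup>2) + 2 * ennreal ((cmod (v t))\<^sup>2)" .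
  qed
  also have "\<dots> = 2 * (\<integral>\<^sup>+t. ennreal ((cmod (u t))\<^sup>2) \<partial>M) + 2 * (\<integral>\<^sup>+t. ennreal ((cmod (v t))\<^sup>2) \<partial>M)"
    by (simp add: nn_integral_add nn_integral_cmult)
  finally show ?thesis .
qed

lemma d_tri:
  assumes [measurable]: "f \<in> borel_measurable M" "g \<in> borel_measurable M" "h \<in> borel_measurable M"
  shows "d M f h \<le> 2 * d M f g + 2 * d M g h"
  using sq_int_add[of "\<lambda>t. f t - g t" M "\<lambda>t. g t - h t"] unfolding d_def by simp

lemma d_add:
  assumes [measurable]: "f \<in> borel_measurable M" "g \<in> borel_measurable M"
    "P \<in> borel_measurable M" "Q \<in> borel_measurable M"
  shows "d M (\<lambda>t. f t + g t) (\<lambda>t. P t + Q t) \<le> 2 * d M f P + 2 * d M g Q"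
  using sq_int_add[of "\<lambda>t. f t - P t" M "\<lambda>t. g t - Q t"] unfolding d_def by (simp add: algebra_simps)

lemma d_scale:
  assumes [measurable]: "f \<in> borel_measurable M" "P \<in> borel_measurable M"
  shows "d M (\<lambda>t. a * f t) (\<lambda>t. a * P t) = ennreal ((cmod a)\<^sup>2) * d M f P"
proof -
  have "d M (\<lambda>t. a * f t) (\<lambda>t. a * P t) = (\<integral>\<^sup>+t. ennreal ((cmod a)\<^sup>2) * ennreal ((cmod (f t - P t))\<^sup>2) \<partial>M)"
    unfolding d_def by (intro nn_integral_cong) (simp add: ennreal_mult[symmetric] right_diff_distrib[symmetric] norm_mult power_mult_distrib)
  also have "\<dots> = ennreal ((cmod a)\<^sup>2) * d M f P"
    unfolding d_def by (simp add: nn_integral_cmult)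
  finally show ?thesis .
qed

definition apx :: "int set \<Rightarrow> real measure \<Rightarrow> (real \<Rightarrow> complex) \<Rightarrow> bool" where
  "apx S M f \<longleftrightarrow> (\<forall>\<epsilon>>0. \<exists>g. tp S g \<and> d M f g < ennreal \<epsilon>)"

lemma tp_meas: "tp S g \<Longrightarrow> X \<in> sets lebesgue \<Longrightarrow> g \<in> borel_measurable (lebesgue_on X)"
  by (intro continuous_imp_measurable_on_sets_lebesgue tp_cont)

lemma ennreal_fifth: "(\<epsilon>::real) > 0 \<Longrightarrow> 2 * ennreal (\<epsilon>/5) + 2 * ennreal (\<epsilon>/5) < ennreal \<epsilon>"
proof -
  assume e: "\<epsilon> > 0"
  have a: "2 * ennreal (\<epsilon>/5) = ennreal (2 * (\<epsilon>/5))" by (subst ennreal_mult) (use e in auto)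
  have "2 * ennreal (\<epsilon>/5) + 2 * ennreal (\<epsilon>/5) = ennreal (2 * (\<epsilon>/5) + 2 * (\<epsilon>/5))"
    unfolding a by (subst ennreal_plus) (use e in auto)
  also have "\<dots> < ennreal \<epsilon>" using e by (subst ennreal_less_iff) auto
  finally show ?thesis .
qed

lemma apx_limit:
  assumes X: "X \<in> sets lebesgue" and f: "f \<in> borel_measurable (lebesgue_on X)"
    and H: "\<And>\<epsilon>. \<epsilon> > 0 \<Longrightarrow> \<exists>g. g \<in> borel_measurable (lebesgue_on X) \<and> apx S (lebesgue_on X) g \<and> d (lebesgue_on X) f g < ennreal \<epsilon>"
  shows "apx S (lebesgue_on X) f"
  unfolding apx_def
proof (intro allI impI)
  fix \<epsilon> :: real assume e: "\<epsilon> > 0"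
  obtain g where g: "g \<in> borel_measurable (lebesgue_on X)" "apx S (lebesgue_on X) g"
      "d (lebesgue_on X) f g < ennreal (\<epsilon>/5)"
    using H[of "\<epsilon>/5"] e by auto
  obtain P where P: "tp S P" "d (lebesgue_on X) g P < ennreal (\<epsilon>/5)"
    using g(2) e unfolding apx_def by (meson zero_less_divide_iff zero_less_numeral)
  have "d (lebesgue_on X) f P \<le> 2 * d (lebesgue_on X) f g + 2 * d (lebesgue_on X) g P"
    by (rule d_tri[OF f g(1) tp_meas[OF P(1) X]])
  also have "\<dots> \<le> 2 * ennreal (\<epsilon>/5) + 2 * ennreal (\<epsilon>/5)"
    using g(3) P(2) by (intro add_mono mult_left_mono) auto
  also have "\<dots> < ennreal \<epsilon>" using ennreal_fifth e by blast
  finally show "\<exists>g. tp S g \<and> d (lebesgue_on X) f g < ennreal \<epsilon>" using P by blast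
qed

lemma apx_tp: "tp S f \<Longrightarrow> apx S M f"
  unfolding apx_def d_def by (intro allI impI exI[of _ f]) auto

lemma apx_add:
  assumes X: "X \<in> sets lebesgue" and f: "f \<in> borel_measurable (lebesgue_on X)"
    and g: "g \<in> borel_measurable (lebesgue_on X)"
    and af: "apx S (lebesgue_on X) f" and ag: "apx S (lebesgue_on X) g"
  shows "apx S (lebesgue_on X) (\<lambda>t. f t + g t)"
  unfolding apx_def
proof (intro allI impI)
  fix \<epsilon> :: real assume e: "\<epsilon> > 0"
  obtain P where P: "tp S P" "d (lebesgue_on X) f P < ennreal (\<epsilon>/5)"
    using af e unfolding apx_def by (meson zero_less_divide_iff zero_less_numeral)
  obtain Q where Q: "tp S Q" "d (lebesgue_on X) g Q < ennreal (\<epsilon>/5)"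
    using ag e unfolding apx_def by (meson zero_less_divide_iff zero_less_numeral)
  have "d (lebesgue_on X) (\<lambda>t. f t + g t) (\<lambda>t. P t + Q t) \<le> 2 * d (lebesgue_on X) f P + 2 * d (lebesgue_on X) g Q"
    by (rule d_add[OF f g tp_meas[OF P(1) X] tp_meas[OF Q(1) X]])
  also have "\<dots> \<le> 2 * ennreal (\<epsilon>/5) + 2 * ennreal (\<epsilon>/5)"
    using P(2) Q(2) by (intro add_mono mult_left_mono) auto
  also have "\<dots> < ennreal \<epsilon>" using ennreal_fifth e by blast
  finally show "\<exists>h. tp S h \<and> d (lebesgue_on X) (\<lambda>t. f t + g t) h < ennreal \<epsilon>"
    using tp_add[OF P(1) Q(1)] by blast
qed

lemma apx_scale:
  assumes X: "X \<in> sets lebesgue" and f: "f \<in> borel_measurable (lebesgue_on X)"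
    and af: "apx S (lebesgue_on X) f"
  shows "apx S (lebesgue_on X) (\<lambda>t. a * f t)"
  unfolding apx_def
proof (intro allI impI)
  fix \<epsilon> :: real assume e: "\<epsilon> > 0"
  define k where "k = (cmod a)\<^sup>2"
  have k: "k \<ge> 0" unfolding k_def by simp
  obtain P where P: "tp S P" "d (lebesgue_on X) f P < ennreal (\<epsilon>/(k+1))"
    using af e k unfolding apx_def by (meson add_nonneg_pos zero_less_divide_iff zero_less_one)
  have "d (lebesgue_on X) (\<lambda>t. a * f t) (\<lambda>t. a * P t) = ennreal k * d (lebesgue_on X) f P"
    unfolding k_def by (rule d_scale[OF f tp_meas[OF P(1) X]])
  also have "\<dots> \<le> ennreal k * ennreal (\<epsilon>/(k+1))"
    using P(2) by (intro mult_left_mono) auto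
  also have "\<dots> = ennreal (k * (\<epsilon>/(k+1)))" by (rule ennreal_mult[symmetric]) (use k e in auto)
  also have "\<dots> < ennreal \<epsilon>"
  proof -
    have "k * (\<epsilon>/(k+1)) < \<epsilon>" using k e by (simp add: field_simps)
    then show ?thesis using e k by (subst ennreal_less_iff) auto
  qed
  finally show "\<exists>h. tp S h \<and> d (lebesgue_on X) (\<lambda>t. a * f t) h < ennreal \<epsilon>"
    using tp_scale[OF P(1)] by blast
qed

lemma apx_sum:
  assumes X: "X \<in> sets lebesgue" and "finite I"
    and "\<And>i. i \<in> I \<Longrightarrow> f i \<in> borel_measurable (lebesgue_on X)"
    and "\<And>i. i \<in> I \<Longrightarrow> apx S (lebesgue_on X) (f i)"
  shows "apx S (lebesgue_on X) (\<lambda>t. \<Sum>i\<in>I. f i t)"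
  using assms(2-)
proof (induction I rule: finite_induct)
  case empty
  then show ?case using apx_tp[OF tp_zero] by simp
next
  case (insert x F)
  have m: "(\<lambda>t. \<Sum>i\<in>F. f i t) \<in> borel_measurable (lebesgue_on X)"
    using insert by (intro borel_measurable_sum) auto
  show ?case using apx_add[OF X _ m _ insert.IH] insert by simp
qed

lemma apx_cong:
  assumes "\<And>t. t \<in> space M \<Longrightarrow> f t = g t" "apx S M g" shows "apx S M f"
proof -
  have "d M f h = d M g h" for h
    unfolding d_def using assms(1) by (intro nn_integral_cong) simp
  then show ?thesis using assms(2) unfolding apx_def by simp
qed

lemma borel_lebon: "(f::real\<Rightarrow>'a::topological_space) \<in> borel_measurable borel \<Longrightarrow> f \<in> borel_measurable (lebesgue_on X)"
  by (intro measurable_restrict_space1 measurable_completion) simp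

lemma emeas_lebon_le1:
  fixes X :: "real set"
  assumes "X \<in> sets lebesgue" "X \<subseteq> {0..1}"
  shows "emeasure (lebesgue_on X) (space (lebesgue_on X)) \<le> 1"
proof -
  have "emeasure (lebesgue_on X) (space (lebesgue_on X)) = emeasure lebesgue X"
    using assms by (simp add: emeasure_restrict_space)
  also have "\<dots> \<le> emeasure lebesgue {0..1::real}"
    using assms emeasure_mono[of X "{0..1::real}" lebesgue] by simp
  finally show ?thesis by simp
qed

lemma apx_unif:
  assumes X: "X \<in> sets lebesgue" "X \<subseteq> {0..1}"
    and H: "\<And>\<epsilon>. \<epsilon> > 0 \<Longrightarrow> \<exists>P. tp S P \<and> (\<forall>t. cmod (f t - P t) < \<epsilon>)"
  shows "apx S (lebesgue_on X) f"
  unfolding apx_def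
proof (intro allI impI)
  fix \<epsilon> :: real assume e: "\<epsilon> > 0"
  obtain P where P: "tp S P" "\<And>t. cmod (f t - P t) < sqrt (\<epsilon>/2)"
    using H[of "sqrt (\<epsilon>/2)"] e by auto
  have "d (lebesgue_on X) f P \<le> (\<integral>\<^sup>+t. ennreal (\<epsilon>/2) \<partial>lebesgue_on X)"
    unfolding d_def
  proof (rule nn_integral_mono)
    fix t
    have "(cmod (f t - P t))\<^sup>2 \<le> (sqrt (\<epsilon>/2))\<^sup>2"
      using P(2)[of t] by (intro power_mono) auto
    then show "ennreal ((cmod (f t - P t))\<^sup>2) \<le> ennreal (\<epsilon>/2)" using e by (intro ennreal_leI) simp
  qed
  also have "\<dots> = ennreal (\<epsilon>/2) * emeasure (lebesgue_on X) (space (lebesgue_on X))" by simp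
  also have "\<dots> \<le> ennreal (\<epsilon>/2) * 1"
    using emeas_lebon_le1[OF X] by (intro mult_left_mono) auto
  also have "\<dots> < ennreal \<epsilon>" using e by (simp add: ennreal_less_iff)
  finally show "\<exists>g. tp S g \<and> d (lebesgue_on X) f g < ennreal \<epsilon>" using P by blast
qed

lemma expo_m1: "expo (-1) t = exp (2 * of_real pi * \<i> * of_real t)"
  unfolding expo_def by simp

lemma circ_inj:
  assumes s: "s \<in> {0..1}" and t: "t \<in> {0<..<1}" and eq: "expo (-1) s = expo (-1) t"
  shows "s = t"
proof (cases "s = 1")
  case True
  have "exp (2 * of_real pi * \<i> * of_real t) = exp 0"
    using eq True by (simp add: expo_m1)
  moreover have "\<bar>Im (2 * of_real pi * \<i> * of_real t) - Im 0\<bar> < 2 * pi"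
    using t by simp
  ultimately have "2 * of_real pi * \<i> * of_real t = 0"
    using exp_complex_eqI by blast
  then show ?thesis using t by simp
next
  case False
  have "exp (2 * of_real pi * \<i> * of_real s) = exp (2 * of_real pi * \<i> * of_real t)"
    using eq by (simp add: expo_m1)
  moreover have "\<bar>Im (2 * of_real pi * \<i> * of_real s) - Im (2 * of_real pi * \<i> * of_real t)\<bar> < 2 * pi"
  proof -
    have "\<bar>s - t\<bar> < 1" using s t False by auto
    then have "2 * pi * \<bar>s - t\<bar> < 2 * pi * 1" by (intro mult_strict_left_mono) auto
    then show ?thesis by (simp add: abs_mult right_diff_distrib[symmetric])
  qed
  ultimately have "2 * of_real pi * \<i> * of_real s = 2 * of_real pi * \<i> * (of_real t :: complex)"
    using exp_complex_eqI by blast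
  then show ?thesis by simp
qed

lemma indicator_closed_apx:
  assumes X: "X \<in> sets lebesgue" "X \<subseteq> {0..1}" and K: "closed K" "K \<subseteq> X"
  shows "apx UNIV (lebesgue_on X) (\<lambda>t. indicator K t)"
proof (cases "K = {}")
  case True
  then show ?thesis using apx_tp[OF tp_zero] by simp
next
  case Kne: False
  define M where "M = lebesgue_on X"
  define CK where "CK = expo (-1) ` K"
  have "K = {0..1} \<inter> K" using K X by auto
  then have "compact K" using compact_Int_closed[OF compact_Icc K(1)] by metis
  then have "compact CK" unfolding CK_def by (intro compact_continuous_image continuous_intros)
  then have cCK: "closed CK" by (rule compact_imp_closed)
  have CKne: "CK \<noteq> {}" using Kne CK_def by auto
  define G where "G i z = max 0 (1 - real i * infdist z CK)" for i z
  define g where "g i t = complex_of_real (G i (expo (-1) t))" for i t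
  have G01: "0 \<le> G i z" "G i z \<le> 1" for i z
    unfolding G_def using infdist_nonneg[of z CK] by auto
  have contG: "continuous_on UNIV (G i)" for i
    unfolding G_def by (intro continuous_intros)
  have contg: "continuous_on UNIV (g i)" for i
    unfolding g_def by (intro continuous_intros continuous_on_compose2[OF contG]) auto
  have mg[measurable]: "g i \<in> borel_measurable M" for i
    unfolding M_def by (intro borel_lebon borel_measurable_continuous_onI contg)
  have KM: "K \<in> sets M"
    unfolding M_def using K X by (simp add: sets_restrict_space_iff borel_closed)
  have mK[measurable]: "(\<lambda>t. indicator K t :: complex) \<in> borel_measurable M"
    using borel_measurable_indicator[OF KM] by simp
  have apg: "apx UNIV M (g i)" for i
    unfolding M_def
  proof (rule apx_unif[OF X])
    fix \<epsilon> :: real assume "\<epsilon> > 0"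
    then show "\<exists>P. tp UNIV P \<and> (\<forall>t. cmod (g i t - P t) < \<epsilon>)"
      unfolding g_def using circ_unif[OF continuous_on_subset[OF contG subset_UNIV]] by blast
  qed
  define u where "u i t = (cmod (indicator K t - g i t))\<^sup>2" for i t
  have mu: "u i \<in> borel_measurable M" for i unfolding u_def by measurable
  have bnd: "norm (u i t) \<le> 1" for i t
  proof -
    have "indicator K t - g i t = complex_of_real (indicator K t - G i (expo (-1) t))"
      by (simp add: g_def indicator_def)
    then have "cmod (indicator K t - g i t) = \<bar>indicator K t - G i (expo (-1) t)\<bar>" by (metis norm_of_real)
    also have "\<dots> \<le> 1" using G01[of i "expo (-1) t"] by (auto simp: indicator_def)
    finally have "cmod (indicator K t - g i t) \<le> 1" .
    then have "(cmod (indicator K t - g i t))\<^sup>2 \<le> 1" by (simp add: power_le_one)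
    then show ?thesis unfolding u_def by simp
  qed
  have fin: "(\<integral>\<^sup>+t. ennreal 1 \<partial>M) < \<infinity>"
    using emeas_lebon_le1[OF X] unfolding M_def by (simp add: ennreal_top_neq_one[symmetric] order_le_less_trans)
  have conv_pt: "(\<lambda>i. u i t) \<longlonglongrightarrow> 0" if t: "t \<in> X" "t \<notin> {0,1}" for t
  proof (cases "t \<in> K")
    case True
    then have "u i t = 0" for i
      unfolding u_def g_def G_def CK_def by simp
    then show ?thesis by simp
  next
    case False
    have t01: "t \<in> {0<..<1}" using t X by auto
    have "expo (-1) t \<notin> CK"
    proof
      assume "expo (-1) t \<in> CK"
      then obtain s where "s \<in> K" "expo (-1) s = expo (-1) t" unfolding CK_def by auto
      then have "s = t" using circ_inj[OF _ t01] K X by auto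
      then show False using False \<open>s \<in> K\<close> by simp
    qed
    then have pos: "infdist (expo (-1) t) CK > 0" using infdist_pos_not_in_closed[OF cCK CKne] by blast
    obtain N :: nat where N: "1 / infdist (expo (-1) t) CK \<le> real N" using real_arch_simple by blast
    have "u i t = 0" if "i \<ge> N" for i
    proof -
      have "1 / infdist (expo (-1) t) CK \<le> real i" using N that by (meson of_nat_mono order_trans)
      then have "1 \<le> real i * infdist (expo (-1) t) CK"
        using pos by (simp add: pos_divide_le_eq)
      then have "G i (expo (-1) t) = 0" unfolding G_def by simp
      then show ?thesis unfolding u_def g_def using False by simp
    qed
    then show ?thesis by (intro tendsto_eventually) (auto simp: eventually_sequentially)
  qed
  have AEc: "AE t in M. (\<lambda>i. u i t) \<longlonglongrightarrow> 0"
  proof -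
    have "AE t in lebesgue. t \<notin> {0,1::real}" by (rule AE_not_in) simp
    then have "AE t in lebesgue. t \<in> X \<longrightarrow> (\<lambda>i. u i t) \<longlonglongrightarrow> 0"
      by eventually_elim (use conv_pt in blast)
    then show ?thesis unfolding M_def using X by (subst AE_restrict_space_iff) auto
  qed
  have conv: "(\<lambda>i. (\<integral>\<^sup>+t. norm (0 - u i t) \<partial>M)) \<longlonglongrightarrow> 0"
  proof (rule nn_integral_dominated_convergence_norm[where w="\<lambda>_. 1"])
    show "u i \<in> borel_measurable M" for i by (rule mu)
    show "(\<lambda>x. 0::real) \<in> borel_measurable M" by simp
    show "(\<lambda>x. 1::real) \<in> borel_measurable M" by simp
    show "AE x in M. norm (u j x) \<le> 1" for j by (rule AE_I2) (rule bnd)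
    show "(\<integral>\<^sup>+x. ennreal 1 \<partial>M) < \<infinity>" by (rule fin)
    show "AE x in M. (\<lambda>i. u i x) \<longlonglongrightarrow> 0" by (rule AEc)
  qed
  have deq: "d M (\<lambda>t. indicator K t) (g i) = (\<integral>\<^sup>+t. norm (0 - u i t) \<partial>M)" for i
    unfolding d_def u_def by simp
  show ?thesis
    unfolding M_def[symmetric]
  proof (rule apx_limit[OF X(1), folded M_def])
    show "(\<lambda>t. indicator K t :: complex) \<in> borel_measurable M" by (rule mK)
    fix \<epsilon> :: real assume e: "\<epsilon> > 0"
    have "eventually (\<lambda>i. (\<integral>\<^sup>+t. norm (0 - u i t) \<partial>M) < ennreal \<epsilon>) sequentially"
      using conv e by (intro order_tendstoD(2)) auto
    then obtain i where "(\<integral>\<^sup>+t. norm (0 - u i t) \<partial>M) < ennreal \<epsilon>"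
      by (auto simp: eventually_sequentially)
    then have "d M (\<lambda>t. indicator K t) (g i) < ennreal \<epsilon>" by (simp only: deq)
    then show "\<exists>g. g \<in> borel_measurable M \<and> apx UNIV M g \<and> d M (\<lambda>t. indicator K t) g < ennreal \<epsilon>"
      using mg[of i] apg[of i] by blast
  qed
qed

lemma indicator_meas_apx:
  fixes X E :: "real set"
  assumes X: "X \<in> sets lebesgue" "X \<subseteq> {0..1}" and E: "E \<in> sets lebesgue" "E \<subseteq> X"
  shows "apx UNIV (lebesgue_on X) (\<lambda>t. indicator E t)"
proof (rule apx_limit[OF X(1)])
  have EM: "E \<in> sets (lebesgue_on X)" using X E by (simp add: sets_restrict_space_iff)
  show "(\<lambda>t. indicator E t) \<in> borel_measurable (lebesgue_on X)"
    using borel_measurable_indicator[OF EM] by simp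
  fix \<epsilon> :: real assume e: "\<epsilon> > 0"
  obtain T where T: "closed T" "T \<subseteq> E" "E - T \<in> lmeasurable" "emeasure lebesgue (E - T) < ennreal \<epsilon>"
    using sets_lebesgue_inner_closed[OF E(1) e] by blast
  have TM: "T \<in> sets (lebesgue_on X)" using X E T by (simp add: sets_restrict_space_iff borel_closed)
  have ETM: "E - T \<in> sets (lebesgue_on X)" using X E T(3) by (auto simp: sets_restrict_space_iff fmeasurableD)
  have "d (lebesgue_on X) (\<lambda>t. indicator E t) (\<lambda>t. indicator T t) = (\<integral>\<^sup>+t. indicator (E - T) t \<partial>lebesgue_on X)"
    unfolding d_def by (intro nn_integral_cong) (use T(2) in \<open>auto simp: indicator_def\<close>)
  also have "\<dots> = emeasure (lebesgue_on X) (E - T)" using ETM by simp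
  also have "\<dots> = emeasure lebesgue (E - T)" using X E by (subst emeasure_restrict_space) auto
  finally have "d (lebesgue_on X) (\<lambda>t. indicator E t) (\<lambda>t. indicator T t) < ennreal \<epsilon>" using T(4) by simp
  moreover have "(\<lambda>t. indicator T t :: complex) \<in> borel_measurable (lebesgue_on X)"
    using borel_measurable_indicator[OF TM] by simp
  moreover have "apx UNIV (lebesgue_on X) (\<lambda>t. indicator T t)"
    using indicator_closed_apx[OF X T(1)] T(2) E(2) by auto
  ultimately show "\<exists>g. g \<in> borel_measurable (lebesgue_on X) \<and> apx UNIV (lebesgue_on X) g \<and>
      d (lebesgue_on X) (\<lambda>t. indicator E t) g < ennreal \<epsilon>" by blast
qed

lemma simple_apx:
  fixes X :: "real set" and s :: "real \<Rightarrow> complex"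
  assumes X: "X \<in> sets lebesgue" "X \<subseteq> {0..1}" and s: "simple_function (lebesgue_on X) s"
  shows "apx UNIV (lebesgue_on X) s"
proof -
  have sp: "space (lebesgue_on X) = X" by simp
  define R where "R t = (\<Sum>y\<in>s ` X. y * indicator (s -` {y} \<inter> X) t)" for t
  have fin: "finite (s ` X)" using simple_functionD(1)[OF s] sp by simp
  have sets: "s -` {y} \<inter> X \<in> sets (lebesgue_on X)" for y
    using simple_functionD(2)[OF s, of "{y}"] sp by simp
  then have leb: "s -` {y} \<inter> X \<in> sets lebesgue" for y
    using X by (simp add: sets_restrict_space_iff)
  have mi: "(\<lambda>t. indicator (s -` {y} \<inter> X) t :: complex) \<in> borel_measurable (lebesgue_on X)" for y
    by (rule borel_measurable_indicator[OF sets])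
  have ai: "apx UNIV (lebesgue_on X) (\<lambda>t. indicator (s -` {y} \<inter> X) t)" for y
    using indicator_meas_apx[OF X leb] by auto
  have aR: "apx UNIV (lebesgue_on X) R" unfolding R_def
  proof (rule apx_sum[OF X(1) fin])
    fix y
    show "(\<lambda>t. y * indicator (s -` {y} \<inter> X) t) \<in> borel_measurable (lebesgue_on X)"
      using mi[of y] by (intro borel_measurable_times borel_measurable_const) auto
    show "apx UNIV (lebesgue_on X) (\<lambda>t. y * indicator (s -` {y} \<inter> X) t)"
      by (rule apx_scale[OF X(1) mi ai])
  qed
  have eq: "s t = R t" if "t \<in> space (lebesgue_on X)" for t
  proof -
    have "s t = (\<Sum>y\<in>s ` space (lebesgue_on X). indicator (s -` {y} \<inter> space (lebesgue_on X)) t *\<^sub>R y)"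
      by (rule simple_function_indicator_representation_banach[OF s that])
    also have "\<dots> = (\<Sum>y\<in>s ` X. indicator (s -` {y} \<inter> X) t *\<^sub>R y)"
      by (simp only: sp)
    also have "\<dots> = R t" unfolding R_def by (intro sum.cong) (auto simp: indicator_def)
    finally show ?thesis .
  qed
  show ?thesis by (rule apx_cong[OF eq aR])
qed

lemma L2_apx:
  fixes X :: "real set" and f :: "real \<Rightarrow> complex"
  assumes X: "X \<in> sets lebesgue" "X \<subseteq> {0..1}" and f[measurable]: "f \<in> borel_measurable (lebesgue_on X)"
    and fin: "(\<integral>\<^sup>+t. ennreal ((cmod (f t))\<^sup>2) \<partial>lebesgue_on X) < \<infinity>"
  shows "apx UNIV (lebesgue_on X) f"
proof -
  obtain F where F: "\<And>i. simple_function (lebesgue_on X) (F i)"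
      "\<And>x. x \<in> space (lebesgue_on X) \<Longrightarrow> (\<lambda>i. F i x) \<longlonglongrightarrow> f x"
      "\<And>i x. x \<in> space (lebesgue_on X) \<Longrightarrow> dist (F i x) 0 \<le> 2 * dist (f x) 0"
    using borel_measurable_implies_sequence_metric[OF f, of 0] by blast
  have mF[measurable]: "F i \<in> borel_measurable (lebesgue_on X)" for i
    using F(1) by (rule borel_measurable_simple_function)
  define u where "u i t = (cmod (f t - F i t))\<^sup>2" for i t
  have mu: "u i \<in> borel_measurable (lebesgue_on X)" for i unfolding u_def by measurable
  have mw: "(\<lambda>x. 9 * (cmod (f x))\<^sup>2) \<in> borel_measurable (lebesgue_on X)" by measurable
  have bnd: "AE x in lebesgue_on X. norm (u i x) \<le> 9 * (cmod (f x))\<^sup>2" for i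
  proof (rule AE_I2)
    fix x assume x: "x \<in> space (lebesgue_on X)"
    have "cmod (f x - F i x) \<le> cmod (f x) + cmod (F i x)" by (rule norm_triangle_ineq4)
    also have "\<dots> \<le> 3 * cmod (f x)" using F(3)[OF x, of i] by simp
    finally have "(cmod (f x - F i x))\<^sup>2 \<le> (3 * cmod (f x))\<^sup>2" by (intro power_mono) auto
    then show "norm (u i x) \<le> 9 * (cmod (f x))\<^sup>2" unfolding u_def by (simp add: power_mult_distrib)
  qed
  have finw: "(\<integral>\<^sup>+x. ennreal (9 * (cmod (f x))\<^sup>2) \<partial>lebesgue_on X) < \<infinity>"
  proof -
    have "(\<integral>\<^sup>+x. ennreal (9 * (cmod (f x))\<^sup>2) \<partial>lebesgue_on X) = 9 * (\<integral>\<^sup>+x. ennreal ((cmod (f x))\<^sup>2) \<partial>lebesgue_on X)"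
      by (simp add: ennreal_mult nn_integral_cmult)
    then show ?thesis using fin by (simp add: ennreal_mult_less_top)
  qed
  have AEc: "AE x in lebesgue_on X. (\<lambda>i. u i x) \<longlonglongrightarrow> 0"
  proof (rule AE_I2)
    fix x assume x: "x \<in> space (lebesgue_on X)"
    have "(\<lambda>i. f x - F i x) \<longlonglongrightarrow> f x - f x" by (intro tendsto_intros F(2)[OF x])
    then have "(\<lambda>i. cmod (f x - F i x)) \<longlonglongrightarrow> 0" by (simp add: tendsto_norm_zero)
    then have "(\<lambda>i. (cmod (f x - F i x))\<^sup>2) \<longlonglongrightarrow> 0\<^sup>2" by (intro tendsto_intros)
    then show "(\<lambda>i. u i x) \<longlonglongrightarrow> 0" unfolding u_def by simp
  qed
  have conv: "(\<lambda>i. (\<integral>\<^sup>+t. norm (0 - u i t) \<partial>lebesgue_on X)) \<longlonglongrightarrow> 0"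
  proof (rule nn_integral_dominated_convergence_norm[where w="\<lambda>x. 9 * (cmod (f x))\<^sup>2"])
    show "u i \<in> borel_measurable (lebesgue_on X)" for i by (rule mu)
    show "(\<lambda>x. 0::real) \<in> borel_measurable (lebesgue_on X)" by simp
    show "(\<lambda>x. 9 * (cmod (f x))\<^sup>2) \<in> borel_measurable (lebesgue_on X)" by (rule mw)
    show "AE x in lebesgue_on X. norm (u j x) \<le> 9 * (cmod (f x))\<^sup>2" for j by (rule bnd)
    show "(\<integral>\<^sup>+x. ennreal (9 * (cmod (f x))\<^sup>2) \<partial>lebesgue_on X) < \<infinity>" by (rule finw)
    show "AE x in lebesgue_on X. (\<lambda>i. u i x) \<longlonglongrightarrow> 0" by (rule AEc)
  qed
  have deq: "d (lebesgue_on X) f (F i) = (\<integral>\<^sup>+t. norm (0 - u i t) \<partial>lebesgue_on X)" for i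
    unfolding d_def u_def by simp
  show ?thesis
  proof (rule apx_limit[OF X(1) f])
    fix \<epsilon> :: real assume e: "\<epsilon> > 0"
    have "eventually (\<lambda>i. (\<integral>\<^sup>+t. norm (0 - u i t) \<partial>lebesgue_on X) < ennreal \<epsilon>) sequentially"
      using conv e by (intro order_tendstoD(2)) auto
    then obtain i where "(\<integral>\<^sup>+t. norm (0 - u i t) \<partial>lebesgue_on X) < ennreal \<epsilon>"
      by (auto simp: eventually_sequentially)
    show "\<exists>g. g \<in> borel_measurable (lebesgue_on X) \<and> apx UNIV (lebesgue_on X) g \<and> d (lebesgue_on X) f g < ennreal \<epsilon>"
    proof -
      have "d (lebesgue_on X) f (F i) < ennreal \<epsilon>" using \<open>_ < ennreal \<epsilon>\<close> by (simp only: deq)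
      then show ?thesis using mF[of i] simple_apx[OF X F(1)[of i]] by blast
    qed
  qed
qed

abbreviation M01 :: "real measure" where "M01 \<equiv> lebesgue_on {0..1::real}"

lemma fin01: "finite_measure M01"
  by (rule finite_measure_lebesgue_on) simp

lemma emeasure01: "emeasure M01 (space M01) = 1"
proof -
  have sp: "space M01 = {0..1}" by simp
  have "emeasure M01 {0..1} = emeasure lebesgue {0..1::real}" by (rule emeasure_restrict_space) auto
  also have "\<dots> = 1" by simp
  finally show ?thesis unfolding sp .
qed

lemma measure01: "measure M01 (space M01) = 1"
  unfolding measure_def emeasure01 by simp

definition good :: "(real \<Rightarrow> complex) \<Rightarrow> bool" where
  "good f \<longleftrightarrow> f \<in> borel_measurable M01 \<and> (\<exists>C. \<forall>t. cmod (f t) \<le> C)"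

lemma good_int: "good f \<Longrightarrow> integrable M01 f"
  unfolding good_def
  by (auto intro!: finite_measure.integrable_const_bound[OF fin01] AE_I2)

lemma real_bdd_int:
  fixes f :: "real \<Rightarrow> real"
  shows "f \<in> borel_measurable M01 \<Longrightarrow> (\<And>t. \<bar>f t\<bar> \<le> C) \<Longrightarrow> integrable M01 f"
  by (rule finite_measure.integrable_const_bound[OF fin01, where B=C]) auto

lemma good_meas: "good f \<Longrightarrow> f \<in> borel_measurable M01" unfolding good_def by simp

lemma good_add: "good f \<Longrightarrow> good g \<Longrightarrow> good (\<lambda>t. f t + g t)"
  unfolding good_def
proof (elim conjE exE, intro conjI)
  fix C D assume "\<forall>t. cmod (f t) \<le> C" "\<forall>t. cmod (g t) \<le> D"
  then have "\<forall>t. cmod (f t + g t) \<le> C + D" by (meson add_mono norm_triangle_le)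
  then show "\<exists>C. \<forall>t. cmod (f t + g t) \<le> C" by blast
qed auto

lemma good_diff: "good f \<Longrightarrow> good g \<Longrightarrow> good (\<lambda>t. f t - g t)"
  unfolding good_def
proof (elim conjE exE, intro conjI)
  fix C D assume "\<forall>t. cmod (f t) \<le> C" "\<forall>t. cmod (g t) \<le> D"
  then have "\<forall>t. cmod (f t - g t) \<le> C + D" by (meson add_mono norm_triangle_le_diff)
  then show "\<exists>C. \<forall>t. cmod (f t - g t) \<le> C" by blast
qed auto

lemma good_mult: "good f \<Longrightarrow> good g \<Longrightarrow> good (\<lambda>t. f t * g t)"
  unfolding good_def
proof (elim conjE exE, intro conjI)
  fix C D assume C: "\<forall>t. cmod (f t) \<le> C" and D: "\<forall>t. cmod (g t) \<le> D"
  have "cmod (f t * g t) \<le> C * D" for t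
    unfolding norm_mult using C D by (meson mult_mono norm_ge_zero order_trans)
  then show "\<exists>C. \<forall>t. cmod (f t * g t) \<le> C" by blast
qed auto

lemma good_const: "good (\<lambda>t. a)"
  unfolding good_def by auto

lemma good_scale: "good f \<Longrightarrow> good (\<lambda>t. a * f t)"
  using good_mult[OF good_const] by blast

lemma good_cnj: "good f \<Longrightarrow> good (\<lambda>t. cnj (f t))"
proof -
  assume "good f"
  then have f: "f \<in> borel_measurable M01" "\<exists>C. \<forall>t. cmod (f t) \<le> C" unfolding good_def by auto
  have "cnj \<in> borel_measurable borel" by (intro borel_measurable_continuous_onI continuous_intros)
  then have "(\<lambda>t. cnj (f t)) \<in> borel_measurable M01" by (rule measurable_compose[OF f(1)])
  then show ?thesis using f(2) unfolding good_def by simp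
qed

lemma good_sum: "finite I \<Longrightarrow> (\<And>i. i \<in> I \<Longrightarrow> good (f i)) \<Longrightarrow> good (\<lambda>t. \<Sum>i\<in>I. f i t)"
proof (induction I rule: finite_induct)
  case empty then show ?case using good_const[of 0] by simp
next
  case (insert x F) then show ?case using good_add[of "f x" "\<lambda>t. \<Sum>i\<in>F. f i t"] by simp
qed

lemma good_tp: "tp S f \<Longrightarrow> good f"
  unfolding good_def using tp_meas[of S f "{0..1}"] tp_bounded by auto

lemma good_expo: "good (expo n)"
  by (rule good_tp[OF tp_expo[of n UNIV]]) simp

lemma good_ind: "E \<in> sets lebesgue \<Longrightarrow> good f \<Longrightarrow> good (\<lambda>t. indicator E t * f t)"
proof -
  assume E: "E \<in> sets lebesgue" and f: "good f"
  have "(\<lambda>t. indicator E t :: complex) \<in> borel_measurable lebesgue"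
    using E by (rule borel_measurable_indicator)
  then have "(\<lambda>t. indicator E t :: complex) \<in> borel_measurable M01"
    by (rule measurable_restrict_space1)
  moreover have "cmod (indicator E t :: complex) \<le> 1" for t by (simp add: indicator_def)
  ultimately have "good (\<lambda>t. indicator E t :: complex)" unfolding good_def by blast
  then show ?thesis using good_mult f by blast
qed

definition ip :: "(real \<Rightarrow> complex) \<Rightarrow> (real \<Rightarrow> complex) \<Rightarrow> complex" where
  "ip f g = integral\<^sup>L M01 (\<lambda>t. f t * cnj (g t))"

lemma ip_int: "good f \<Longrightarrow> good g \<Longrightarrow> integrable M01 (\<lambda>t. f t * cnj (g t))"
  by (intro good_int good_mult good_cnj)

lemma ip_add: "good f \<Longrightarrow> good g \<Longrightarrow> good h \<Longrightarrow> ip (\<lambda>t. f t + g t) h = ip f h + ip g h"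
  unfolding ip_def distrib_right by (intro Bochner_Integration.integral_add ip_int)

lemma ip_diff: "good f \<Longrightarrow> good g \<Longrightarrow> good h \<Longrightarrow> ip (\<lambda>t. f t - g t) h = ip f h - ip g h"
  unfolding ip_def left_diff_distrib by (intro Bochner_Integration.integral_diff ip_int)

lemma ip_scale: "ip (\<lambda>t. a * f t) h = a * ip f h"
  unfolding ip_def by (simp add: mult.assoc)

lemma ip_sum: "(\<And>i. i \<in> I \<Longrightarrow> good (f i)) \<Longrightarrow> good h \<Longrightarrow> ip (\<lambda>t. \<Sum>i\<in>I. f i t) h = (\<Sum>i\<in>I. ip (f i) h)"
  unfolding ip_def sum_distrib_right by (intro Bochner_Integration.integral_sum ip_int)

lemma ip_diff2: "good f \<Longrightarrow> good g \<Longrightarrow> good h \<Longrightarrow> ip f (\<lambda>t. g t - h t) = ip f g - ip f h"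
  unfolding ip_def by (simp add: right_diff_distrib ip_int)

lemma ip_scale2: "ip f (\<lambda>t. a * g t) = cnj a * ip f g"
  unfolding ip_def by (simp add: algebra_simps)

lemma ip_sum2: "(\<And>i. i \<in> I \<Longrightarrow> good (g i)) \<Longrightarrow> good f \<Longrightarrow> ip f (\<lambda>t. \<Sum>i\<in>I. g i t) = (\<Sum>i\<in>I. ip f (g i))"
  unfolding ip_def cnj_sum sum_distrib_left by (intro Bochner_Integration.integral_sum ip_int)

lemma integral_expo:
  assumes "m \<noteq> 0" shows "integral\<^sup>L M01 (expo m) = 0"
proof -
  define a where "a = - (2 * of_real pi * \<i> * of_int m :: complex)"
  have a0: "a \<noteq> 0" using assms by (simp add: a_def)
  have ea: "expo m = (\<lambda>t. exp (a * complex_of_real t))"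
    unfolding expo_def a_def by (rule ext) (simp add: algebra_simps)
  have "integral\<^sup>L M01 (expo m) = integral {0..1} (expo m)"
    by (intro lebesgue_integral_eq_integral good_int good_expo) simp
  also have "\<dots> = (exp (a * of_real 1) - 1) / a"
    unfolding ea by (rule integral_exp) (use a0 in auto)
  also have "exp (a * of_real 1) = 1"
    unfolding exp_eq_1 a_def by (auto intro!: exI[of _ "- m"])
  finally show ?thesis by simp
qed

lemma ortho: "ip (expo j) (expo k) = (if j = k then 1 else 0)"
proof -
  have "ip (expo j) (expo k) = integral\<^sup>L M01 (expo (j - k))"
    unfolding ip_def cnj_expo expo_mult by simp
  also have "\<dots> = (if j = k then 1 else 0)"
  proof (cases "j = k")
    case True
    have "expo 0 = (\<lambda>t. 1)" by (rule ext) simp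
    then show ?thesis using measure01 True by simp
  next
    case False
    then show ?thesis using integral_expo[of "j - k"] by simp
  qed
  finally show ?thesis .
qed

lemma expo_pow: "expo (-1) t ^ n * expo N t = expo (N - int n) t"
proof (induction n)
  case 0 then show ?case by simp
next
  case (Suc n)
  have "expo (-1) t ^ Suc n * expo N t = expo (-1) t * (expo (-1) t ^ n * expo N t)"
    by (simp add: mult.assoc)
  also have "\<dots> = expo (-1 + (N - int n)) t" unfolding Suc expo_mult ..
  also have "-1 + (N - int n) = N - int (Suc n)" by simp
  finally show ?case .
qed

lemma circ_inj01: "inj_on (expo (-1)) {0..<1}"
proof (rule inj_onI)
  fix s t :: real assume s: "s \<in> {0..<1}" and t: "t \<in> {0..<1}" and eq: "expo (-1) s = expo (-1) t"
  show "s = t"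
  proof (cases "s \<in> {0<..<1}")
    case True
    then show ?thesis using circ_inj[of t s] t eq by auto
  next
    case False
    then have s0: "s = 0" using s by auto
    show ?thesis
    proof (cases "t \<in> {0<..<1}")
      case True
      then show ?thesis using circ_inj[of s t] s eq by auto
    next
      case False
      then show ?thesis using t s0 by auto
    qed
  qed
qed

lemma zero_finite:
  fixes c :: "int \<Rightarrow> complex"
  assumes F: "finite F" "m0 \<in> F" "c m0 \<noteq> 0"
  shows "finite {t\<in>{0..1}. (\<Sum>k\<in>F. c k * expo k t) = 0}"
proof -
  define N where "N = Max F"
  have kN: "k \<le> N" if "k \<in> F" for k using F that by (simp add: N_def)
  define p where "p = (\<Sum>k\<in>F. monom (c k) (nat (N - k)))"
  have ev: "(\<Sum>k\<in>F. c k * expo k t) = poly p (expo (-1) t) * expo N t" for t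
  proof -
    have "poly p (expo (-1) t) * expo N t = (\<Sum>k\<in>F. c k * (expo (-1) t ^ nat (N - k) * expo N t))"
      unfolding p_def poly_sum poly_monom sum_distrib_right by (simp add: mult.assoc)
    also have "\<dots> = (\<Sum>k\<in>F. c k * expo k t)"
      by (intro sum.cong refl) (simp add: expo_pow kN)
    finally show ?thesis by simp
  qed
  have "coeff p (nat (N - m0)) = c m0"
  proof -
    have "coeff p (nat (N - m0)) = (\<Sum>k\<in>F. if nat (N - k) = nat (N - m0) then c k else 0)"
      unfolding p_def coeff_sum coeff_monom by simp
    also have "\<dots> = (\<Sum>k\<in>F. if k = m0 then c k else 0)"
    proof (intro sum.cong refl)
      fix k assume "k \<in> F"
      then have "nat (N - k) = nat (N - m0) \<longleftrightarrow> k = m0" using kN[of k] kN[OF F(2)] by auto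
      then show "(if nat (N - k) = nat (N - m0) then c k else 0) = (if k = m0 then c k else 0)" by simp
    qed
    also have "\<dots> = c m0" using F by simp
    finally show ?thesis .
  qed
  then have p0: "p \<noteq> 0" using F(3) by auto
  have sub: "{t\<in>{0..1}. (\<Sum>k\<in>F. c k * expo k t) = 0} \<subseteq> insert 1 (expo (-1) -` {x. poly p x = 0} \<inter> {0..<1})"
  proof
    fix t assume "t \<in> {t\<in>{0..1}. (\<Sum>k\<in>F. c k * expo k t) = 0}"
    then have t: "t \<in> {0..1}" "poly p (expo (-1) t) * expo N t = 0" using ev by auto
    have "expo N t \<noteq> 0" using norm_expo[of N t] by (metis norm_zero zero_neq_one)
    then have "poly p (expo (-1) t) = 0" using t(2) by simp
    then show "t \<in> insert 1 (expo (-1) -` {x. poly p x = 0} \<inter> {0..<1})" using t(1) by auto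
  qed
  moreover have "finite (insert 1 (expo (-1) -` {x. poly p x = 0} \<inter> {0..<1}))"
    using finite_vimage_IntI[OF poly_roots_finite[OF p0] circ_inj01] by simp
  ultimately show ?thesis by (rule finite_subset)
qed

lemma ind_meas01: "B \<in> sets lebesgue \<Longrightarrow> (\<lambda>t. indicator B t :: real) \<in> borel_measurable M01"
  by (intro measurable_restrict_space1 borel_measurable_indicator)

lemma mult_cnj_sq: "z * cnj z = (complex_of_real (cmod z))\<^sup>2"
  by (metis complex_norm_square of_real_power)

lemma DB:
  assumes B: "B \<in> sets lebesgue" "B \<subseteq> {0..1}" "emeasure lebesgue B \<noteq> 0" and F: "finite F"
  shows "\<exists>\<psi>. (\<forall>m\<in>F. good (\<psi> m) \<and> (\<forall>t. t \<notin> B \<longrightarrow> \<psi> m t = 0)) \<and>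
             (\<forall>m\<in>F. \<forall>k\<in>F. ip (\<psi> m) (expo k) = (if m = k then 1 else 0))"
  using F
proof (induction F rule: finite_induct)
  case empty then show ?case by auto
next
  case (insert m0 F)
  obtain \<psi> where \<psi>g: "\<And>m. m\<in>F \<Longrightarrow> good (\<psi> m)" and \<psi>s: "\<And>m t. m\<in>F \<Longrightarrow> t \<notin> B \<Longrightarrow> \<psi> m t = 0"
     and \<psi>i: "\<And>m k. m\<in>F \<Longrightarrow> k\<in>F \<Longrightarrow> ip (\<psi> m) (expo k) = (if m = k then 1 else 0)"
    using insert.IH by blast
  define V where "V \<rho> \<longleftrightarrow> good \<rho> \<and> (\<forall>t. t \<notin> B \<longrightarrow> \<rho> t = 0)" for \<rho>
  define pr where "pr \<rho> = (\<lambda>t. \<rho> t - (\<Sum>m\<in>F. ip \<rho> (expo m) * \<psi> m t))" for \<rho>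
  have gsum: "good (\<lambda>t. \<Sum>m\<in>F. a m * \<psi> m t)" for a
    by (intro good_sum insert.hyps(1) good_scale \<psi>g)
  have good_pr: "good (pr \<rho>)" if "good \<rho>" for \<rho>
    unfolding pr_def by (intro good_diff that gsum)
  have V_pr: "V (pr \<rho>)" if "V \<rho>" for \<rho>
    using that good_pr \<psi>s unfolding V_def pr_def by simp
  have ip_pr: "ip (pr \<rho>) (expo k) = ip \<rho> (expo k) - (\<Sum>m\<in>F. ip \<rho> (expo m) * ip (\<psi> m) (expo k))"
    if "good \<rho>" for \<rho> k
  proof -
    have "ip (pr \<rho>) (expo k) = ip \<rho> (expo k) - ip (\<lambda>t. \<Sum>m\<in>F. ip \<rho> (expo m) * \<psi> m t) (expo k)"
      unfolding pr_def by (rule ip_diff[OF that gsum good_expo])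
    also have "ip (\<lambda>t. \<Sum>m\<in>F. ip \<rho> (expo m) * \<psi> m t) (expo k) = (\<Sum>m\<in>F. ip \<rho> (expo m) * ip (\<psi> m) (expo k))"
      by (subst ip_sum) (auto intro: good_scale \<psi>g good_expo simp: ip_scale)
    finally show ?thesis .
  qed
  have ip_pr0: "ip (pr \<rho>) (expo k) = 0" if "good \<rho>" "k \<in> F" for \<rho> k
  proof -
    have "(\<Sum>m\<in>F. ip \<rho> (expo m) * ip (\<psi> m) (expo k)) = (\<Sum>m\<in>F. if m = k then ip \<rho> (expo m) else 0)"
      by (intro sum.cong refl) (simp add: \<psi>i that(2))
    also have "\<dots> = ip \<rho> (expo k)" using that(2) insert.hyps(1) by simp
    finally show ?thesis using ip_pr[OF that(1)] by simp
  qed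
  define \<beta> where "\<beta> m = ip (\<psi> m) (expo m0)" for m
  have ex: "\<exists>\<rho>. V \<rho> \<and> ip (pr \<rho>) (expo m0) \<noteq> 0"
  proof (rule ccontr)
    assume "\<not> ?thesis"
    then have H: "ip (pr \<rho>) (expo m0) = 0" if "V \<rho>" for \<rho> using that by blast
    define q where "q t = expo m0 t - (\<Sum>m\<in>F. cnj (\<beta> m) * expo m t)" for t
    have gs2: "good (\<lambda>t. \<Sum>m\<in>F. cnj (\<beta> m) * expo m t)"
      by (intro good_sum insert.hyps(1) good_scale good_expo)
    have gq: "good q" unfolding q_def by (intro good_diff good_expo gs2)
    define \<rho> where "\<rho> t = indicator B t * q t" for t
    have g\<rho>: "good \<rho>" unfolding \<rho>_def by (rule good_ind[OF B(1) gq])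
    have V\<rho>: "V \<rho>" unfolding V_def using g\<rho> by (simp add: \<rho>_def)
    have "ip \<rho> q = ip \<rho> (expo m0) - ip \<rho> (\<lambda>t. \<Sum>m\<in>F. cnj (\<beta> m) * expo m t)"
      unfolding q_def by (rule ip_diff2[OF g\<rho> good_expo gs2])
    also have "ip \<rho> (\<lambda>t. \<Sum>m\<in>F. cnj (\<beta> m) * expo m t) = (\<Sum>m\<in>F. ip \<rho> (expo m) * \<beta> m)"
      by (subst ip_sum2) (auto intro: good_scale good_expo g\<rho> simp: ip_scale2 mult.commute)
    also have "ip \<rho> (expo m0) - (\<Sum>m\<in>F. ip \<rho> (expo m) * \<beta> m) = ip (pr \<rho>) (expo m0)"
      using ip_pr[OF g\<rho>, of m0] by (simp add: \<beta>_def)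
    also have "\<dots> = 0" by (rule H[OF V\<rho>])
    finally have ipq: "ip \<rho> q = 0" .
    have eqf: "(\<lambda>t. \<rho> t * cnj (q t)) = (\<lambda>t. complex_of_real (indicator B t * (cmod (q t))\<^sup>2))"
    proof
      fix t show "\<rho> t * cnj (q t) = complex_of_real (indicator B t * (cmod (q t))\<^sup>2)"
        unfolding \<rho>_def by (cases "t \<in> B") (simp_all add: mult_cnj_sq)
    qed
    obtain C where C: "\<And>t. cmod (q t) \<le> C" using gq unfolding good_def by blast
    have mq: "(\<lambda>t. indicator B t * (cmod (q t))\<^sup>2) \<in> borel_measurable M01"
      using ind_meas01[OF B(1)] good_meas[OF gq] by measurable
    have int: "integrable M01 (\<lambda>t. indicator B t * (cmod (q t))\<^sup>2)"
    proof (rule real_bdd_int[OF mq])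
      fix t
      have "(cmod (q t))\<^sup>2 \<le> C\<^sup>2" using C[of t] by (intro power_mono) auto
      then show "\<bar>indicator B t * (cmod (q t))\<^sup>2\<bar> \<le> C\<^sup>2" by (simp add: indicator_def)
    qed
    have "ip \<rho> q = complex_of_real (integral\<^sup>L M01 (\<lambda>t. indicator B t * (cmod (q t))\<^sup>2))"
      unfolding ip_def eqf by (rule integral_complex_of_real)
    then have "complex_of_real (integral\<^sup>L M01 (\<lambda>t. indicator B t * (cmod (q t))\<^sup>2)) = 0"
      using ipq by simp
    then have "integral\<^sup>L M01 (\<lambda>t. indicator B t * (cmod (q t))\<^sup>2) = 0" by simp
    then have "AE t in M01. indicator B t * (cmod (q t))\<^sup>2 = 0"
      using integral_nonneg_eq_0_iff_AE[OF int] by simp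
    then have AE1: "AE t in lebesgue. t \<in> {0..1} \<longrightarrow> indicator B t * (cmod (q t))\<^sup>2 = 0"
      by (subst (asm) AE_restrict_space_iff) auto
    define c' where "c' k = (if k = m0 then 1 else - cnj (\<beta> k))" for k
    have qsum: "q t = (\<Sum>k\<in>insert m0 F. c' k * expo k t)" for t
    proof -
      have "(\<Sum>k\<in>insert m0 F. c' k * expo k t) = c' m0 * expo m0 t + (\<Sum>k\<in>F. c' k * expo k t)"
        by (rule sum.insert) (use insert.hyps in auto)
      also have "(\<Sum>k\<in>F. c' k * expo k t) = (\<Sum>m\<in>F. - (cnj (\<beta> m) * expo m t))"
        by (rule sum.cong) (use insert.hyps in \<open>auto simp: c'_def\<close>)
      finally show ?thesis unfolding q_def c'_def sum_negf by simp
    qed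
    have "{t\<in>{0..1}. q t = 0} = {t\<in>{0..1}. (\<Sum>k\<in>insert m0 F. c' k * expo k t) = 0}"
      using qsum by simp
    moreover have "finite {t\<in>{0..1}. (\<Sum>k\<in>insert m0 F. c' k * expo k t) = 0}"
      by (rule zero_finite) (use insert.hyps in \<open>auto simp: c'_def\<close>)
    ultimately have finZ: "finite {t\<in>{0..1}. q t = 0}" by simp
    have AE2: "AE t in lebesgue. t \<notin> {t\<in>{0..1}. q t = 0}"
      by (rule AE_not_in[OF null_sets_completionI[OF finite_imp_null_set_lborel[OF finZ]]])
    have "AE t in lebesgue. t \<notin> B"
      using AE1 AE2
    proof eventually_elim
      case (elim t)
      show "t \<notin> B"
      proof
        assume tB: "t \<in> B"
        then have "t \<in> {0..1}" using B(2) by auto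
        then have "(cmod (q t))\<^sup>2 = 0" using elim(1) tB by simp
        then have "q t = 0" by simp
        then show False using elim(2) \<open>t \<in> {0..1}\<close> by simp
      qed
    qed
    then have "B \<in> null_sets lebesgue" using AE_iff_null_sets[OF B(1)] by simp
    then show False using B(3) by (simp add: null_setsD1)
  qed
  obtain \<rho>0 where \<rho>0: "V \<rho>0" "ip (pr \<rho>0) (expo m0) \<noteq> 0" using ex by blast
  define \<alpha> where "\<alpha> = ip (pr \<rho>0) (expo m0)"
  define chi where "chi = (\<lambda>t. inverse \<alpha> * pr \<rho>0 t)"
  have Vchi: "V chi" using V_pr[OF \<rho>0(1)] unfolding V_def chi_def by (auto intro: good_scale)
  have g\<rho>0: "good \<rho>0" using \<rho>0(1) V_def by simp
  have chiF: "ip chi (expo k) = 0" if "k \<in> F" for k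
    unfolding chi_def ip_scale using ip_pr0[OF g\<rho>0 that] by simp
  have chi0: "ip chi (expo m0) = 1" unfolding chi_def ip_scale using \<rho>0(2) by (simp add: \<alpha>_def)
  have gchi: "good chi" using Vchi V_def by simp
  define \<psi>' where "\<psi>' m = (if m = m0 then chi else (\<lambda>t. \<psi> m t - \<beta> m * chi t))" for m
  have P1: "good (\<psi>' m)" if "m \<in> insert m0 F" for m
    using that gchi \<psi>g unfolding \<psi>'_def by (auto intro: good_diff good_scale)
  have P2: "\<forall>t. t \<notin> B \<longrightarrow> \<psi>' m t = 0" if "m \<in> insert m0 F" for m
    using that Vchi \<psi>s unfolding \<psi>'_def V_def by auto
  have P3: "ip (\<psi>' m) (expo k) = (if m = k then 1 else 0)" if "m \<in> insert m0 F" "k \<in> insert m0 F" for m k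
  proof (cases "m = m0")
    case True
    then show ?thesis using that(2) chiF chi0 insert.hyps(2) unfolding \<psi>'_def by auto
  next
    case False
    then have mF: "m \<in> F" using that(1) by simp
    have "ip (\<psi>' m) (expo k) = ip (\<psi> m) (expo k) - \<beta> m * ip chi (expo k)"
      unfolding \<psi>'_def using False by (simp add: ip_diff[OF \<psi>g[OF mF] good_scale[OF gchi] good_expo] ip_scale)
    also have "\<dots> = (if m = k then 1 else 0)"
    proof (cases "k = m0")
      case True
      then show ?thesis using chi0 False by (simp add: \<beta>_def)
    next
      case False
      then have "k \<in> F" using that(2) by simp
      then show ?thesis using chiF \<psi>i[OF mF] by simp
    qed
    finally show ?thesis .
  qed
  show ?case
    apply (rule exI[of _ \<psi>'])
    using P1 P2 P3 by blast
qed

lemma amgm_pt: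
  fixes a y :: real
  assumes s: "a > 0" and x: "y \<ge> 0"
  shows "y \<le> a / 2 + (1 / (2 * a)) * y\<^sup>2"
proof -
  have "0 \<le> (y - a)\<^sup>2" by simp
  then have "2 * a * y \<le> y\<^sup>2 + a\<^sup>2" by (simp add: power2_eq_square algebra_simps)
  then have "y \<le> (y\<^sup>2 + a\<^sup>2) / (2 * a)" using s by (simp add: field_simps)
  also have "\<dots> = a / 2 + (1 / (2 * a)) * y\<^sup>2" using s by (simp add: field_simps power2_eq_square)
  finally show ?thesis .
qed

lemma enn_lin: "(a::real) \<ge> 0 \<Longrightarrow> b \<ge> 0 \<Longrightarrow> x \<ge> 0 \<Longrightarrow> ennreal a + ennreal b * ennreal x = ennreal (a + b * x)"
  by (metis ennreal_mult ennreal_plus mult_nonneg_nonneg)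

lemma enn2: "(y::real) \<ge> 0 \<Longrightarrow> 2 * ennreal y = ennreal (2 * y)"
  by (subst ennreal_mult) auto

lemma removal:
  fixes A :: "real set"
  assumes A: "A \<in> sets lebesgue" "A \<subseteq> {0..1}" "emeasure lebesgue A < 1" and F: "finite F" and e: "\<epsilon> > 0"
  shows "\<exists>g. tp (-F) g \<and> d (lebesgue_on A) (expo n) g < ennreal \<epsilon>"
proof -
  define B where "B = {0..1} - A"
  have Bm: "B \<in> sets lebesgue" "B \<subseteq> {0..1}" using A by (auto simp: B_def)
  have Bpos: "emeasure lebesgue B \<noteq> 0"
  proof
    assume B0: "emeasure lebesgue B = 0"
    have "emeasure lebesgue {0..1::real} \<le> emeasure lebesgue (A \<union> B)"
      by (rule emeasure_mono) (use A Bm in \<open>auto simp: B_def\<close>)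
    also have "\<dots> \<le> emeasure lebesgue A + emeasure lebesgue B"
      by (rule emeasure_subadditive) (use A Bm in auto)
    also have "\<dots> < 1" using A(3) B0 by simp
    finally show False by simp
  qed
  obtain \<psi> where \<psi>: "\<forall>m\<in>F. good (\<psi> m) \<and> (\<forall>t. t \<notin> B \<longrightarrow> \<psi> m t = 0)"
      "\<forall>m\<in>F. \<forall>k\<in>F. ip (\<psi> m) (expo k) = (if m = k then 1 else 0)"
    using DB[OF Bm Bpos F] by blast
  have \<psi>g: "\<And>m. m \<in> F \<Longrightarrow> good (\<psi> m)" using \<psi>(1) by blast
  have \<psi>s: "\<And>m t. m \<in> F \<Longrightarrow> t \<notin> B \<Longrightarrow> \<psi> m t = 0" using \<psi>(1) by blast
  have \<psi>i: "\<And>m k. m \<in> F \<Longrightarrow> k \<in> F \<Longrightarrow> ip (\<psi> m) (expo k) = (if m = k then 1 else 0)" using \<psi>(2) by blast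
  define en where "en = (\<lambda>t. indicator A t * expo n t)"
  have gen: "good en" unfolding en_def by (rule good_ind[OF A(1) good_expo])
  define \<phi> where "\<phi> = (\<lambda>t. en t - (\<Sum>m\<in>F. ip en (expo m) * \<psi> m t))"
  have gsum: "good (\<lambda>t. \<Sum>m\<in>F. ip en (expo m) * \<psi> m t)"
    by (intro good_sum F good_scale \<psi>g)
  have g\<phi>: "good \<phi>" unfolding \<phi>_def by (intro good_diff gen gsum)
  have \<phi>A: "\<phi> t = expo n t" if "t \<in> A" for t
  proof -
    have "t \<notin> B" using that by (simp add: B_def)
    then show ?thesis using that \<psi>s unfolding \<phi>_def en_def by simp
  qed
  have \<phi>0: "ip \<phi> (expo k) = 0" if k: "k \<in> F" for k
  proof -
    have "ip \<phi> (expo k) = ip en (expo k) - ip (\<lambda>t. \<Sum>m\<in>F. ip en (expo m) * \<psi> m t) (expo k)"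
      unfolding \<phi>_def by (rule ip_diff[OF gen gsum good_expo])
    also have "ip (\<lambda>t. \<Sum>m\<in>F. ip en (expo m) * \<psi> m t) (expo k) = (\<Sum>m\<in>F. ip en (expo m) * ip (\<psi> m) (expo k))"
      by (subst ip_sum) (auto intro: good_scale \<psi>g good_expo simp: ip_scale)
    also have "\<dots> = (\<Sum>m\<in>F. if m = k then ip en (expo m) else 0)"
      by (intro sum.cong refl) (simp add: \<psi>i k)
    also have "\<dots> = ip en (expo k)" using k F by simp
    finally show ?thesis by simp
  qed
  obtain C\<phi> where C\<phi>: "\<And>t. cmod (\<phi> t) \<le> C\<phi>" using g\<phi> unfolding good_def by blast
  have fin: "(\<integral>\<^sup>+t. ennreal ((cmod (\<phi> t))\<^sup>2) \<partial>M01) < \<infinity>"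
  proof -
    have "(\<integral>\<^sup>+t. ennreal ((cmod (\<phi> t))\<^sup>2) \<partial>M01) \<le> (\<integral>\<^sup>+t. ennreal (C\<phi>\<^sup>2) \<partial>M01)"
    proof (rule nn_integral_mono)
      fix t show "ennreal ((cmod (\<phi> t))\<^sup>2) \<le> ennreal (C\<phi>\<^sup>2)"
        using C\<phi>[of t] by (intro ennreal_leI power_mono) auto
    qed
    also have "\<dots> = ennreal (C\<phi>\<^sup>2)" using emeasure01 by simp
    finally show ?thesis using order_le_less_trans by fastforce
  qed
  have ap\<phi>: "apx UNIV M01 \<phi>"
    by (rule L2_apx) (use g\<phi> fin in \<open>auto simp: good_def\<close>)
  define K where "K = real (card F)"
  have K0: "K \<ge> 0" unfolding K_def by simp
  define s where "s = sqrt (\<epsilon> / (4 * (1 + K\<^sup>2)))"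
  have s0: "s > 0" unfolding s_def using e K0 by (simp add: add_pos_nonneg)
  have s2: "s\<^sup>2 = \<epsilon> / (4 * (1 + K\<^sup>2))" unfolding s_def using e K0
    by (simp add: add_pos_nonneg less_imp_le)
  obtain P where P: "tp UNIV P" "d M01 \<phi> P < ennreal (s\<^sup>2)"
  proof -
    have "s\<^sup>2 > 0" using s0 by simp
    then show ?thesis using that ap\<phi>[unfolded apx_def, rule_format, of "s\<^sup>2"] by blast
  qed
  obtain G c where G: "finite G" "P = (\<lambda>t. \<Sum>k\<in>G. c k * expo k t)" using P(1) unfolding tp_def by auto
  define P' where "P' = (\<lambda>t. \<Sum>k\<in>G - F. c k * expo k t)"
  have tpP': "tp (-F) P'" unfolding tp_def P'_def using G(1)
    by (intro exI[of _ "G - F"] exI[of _ c]) auto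
  have gP: "good P" by (rule good_tp[OF P(1)])
  have gP': "good P'" by (rule good_tp[OF tpP'])
  have ck: "c k = ip P (expo k)" if "k \<in> G" for k
  proof -
    have "ip P (expo k) = (\<Sum>j\<in>G. ip (\<lambda>t. c j * expo j t) (expo k))"
      unfolding G(2) by (rule ip_sum) (auto intro: good_scale good_expo)
    also have "\<dots> = (\<Sum>j\<in>G. if j = k then c j else 0)"
      by (intro sum.cong refl) (simp add: ip_scale ortho)
    also have "\<dots> = c k" using that G(1) by simp
    finally show ?thesis by simp
  qed
  define h where "h = (\<lambda>t. P t - \<phi> t)"
  have gh: "good h" unfolding h_def by (intro good_diff gP g\<phi>)
  have ckh: "c k = ip h (expo k)" if "k \<in> G" "k \<in> F" for k
    unfolding h_def using ck[OF that(1)] \<phi>0[OF that(2)] ip_diff[OF gP g\<phi> good_expo] by simp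
  have mh[measurable]: "h \<in> borel_measurable M01" using gh by (simp add: good_def)
  have L1: "(\<integral>\<^sup>+t. ennreal (cmod (h t)) \<partial>M01) \<le> ennreal s"
  proof -
    have "(\<integral>\<^sup>+t. ennreal (cmod (h t)) \<partial>M01) \<le>
          (\<integral>\<^sup>+t. ennreal (s / 2) + ennreal (1 / (2 * s)) * ennreal ((cmod (h t))\<^sup>2) \<partial>M01)"
    proof (rule nn_integral_mono)
      fix t
      have "ennreal (cmod (h t)) \<le> ennreal (s / 2 + (1 / (2 * s)) * (cmod (h t))\<^sup>2)"
        by (intro ennreal_leI amgm_pt s0) simp
      also have "\<dots> = ennreal (s / 2) + ennreal (1 / (2 * s)) * ennreal ((cmod (h t))\<^sup>2)"
        using s0 by (intro enn_lin[symmetric]) auto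
      finally show "ennreal (cmod (h t)) \<le> ennreal (s / 2) + ennreal (1 / (2 * s)) * ennreal ((cmod (h t))\<^sup>2)" .
    qed
    also have "\<dots> = ennreal (s / 2) * emeasure M01 (space M01) + ennreal (1 / (2 * s)) * (\<integral>\<^sup>+t. ennreal ((cmod (h t))\<^sup>2) \<partial>M01)"
      by (simp add: nn_integral_add nn_integral_cmult)
    also have "(\<integral>\<^sup>+t. ennreal ((cmod (h t))\<^sup>2) \<partial>M01) = d M01 \<phi> P"
      unfolding d_def h_def by (simp add: norm_minus_commute)
    also have "ennreal (s / 2) * emeasure M01 (space M01) + ennreal (1 / (2 * s)) * d M01 \<phi> P
        \<le> ennreal (s / 2) * 1 + ennreal (1 / (2 * s)) * ennreal (s\<^sup>2)"
      using P(2) emeasure01 by (intro add_mono mult_left_mono) auto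
    also have "\<dots> = ennreal (s / 2 + (1 / (2 * s)) * s\<^sup>2)"
      unfolding mult_1_right using s0 by (intro enn_lin) auto
    also have "s / 2 + (1 / (2 * s)) * s\<^sup>2 = s" using s0 by (simp add: field_simps power2_eq_square)
    finally show ?thesis .
  qed
  have cbound: "cmod (c k) \<le> s" if "k \<in> G" "k \<in> F" for k
  proof -
    have "ennreal (cmod (ip h (expo k))) \<le> (\<integral>\<^sup>+t. norm (h t * cnj (expo k t)) \<partial>M01)"
      unfolding ip_def by (rule integral_norm_bound_ennreal[OF ip_int[OF gh good_expo]])
    also have "\<dots> = (\<integral>\<^sup>+t. ennreal (cmod (h t)) \<partial>M01)" by (simp add: norm_mult)
    also have "\<dots> \<le> ennreal s" by (rule L1)
    finally show ?thesis using ckh[OF that] s0 by simp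
  qed
  have dPP': "d M01 P P' \<le> ennreal ((K * s)\<^sup>2)"
  proof -
    have pt: "cmod (P t - P' t) \<le> K * s" for t
    proof -
      have "P t = (\<Sum>k\<in>G \<inter> F. c k * expo k t) + P' t"
        unfolding G(2) P'_def by (rule sum.Int_Diff[OF G(1)])
      then have "cmod (P t - P' t) = cmod (\<Sum>k\<in>G \<inter> F. c k * expo k t)" by simp
      also have "\<dots> \<le> (\<Sum>k\<in>G \<inter> F. cmod (c k * expo k t))" by (rule norm_sum)
      also have "\<dots> \<le> of_nat (card (G \<inter> F)) * s"
        by (rule sum_bounded_above) (simp add: norm_mult cbound)
      also have "\<dots> \<le> K * s" unfolding K_def using s0 F by (intro mult_right_mono) (auto intro: card_mono)
      finally show ?thesis .
    qed
    have "d M01 P P' \<le> (\<integral>\<^sup>+t. ennreal ((K * s)\<^sup>2) \<partial>M01)"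
      unfolding d_def
    proof (rule nn_integral_mono)
      fix t show "ennreal ((cmod (P t - P' t))\<^sup>2) \<le> ennreal ((K * s)\<^sup>2)"
        using pt[of t] by (intro ennreal_leI power_mono) auto
    qed
    also have "\<dots> = ennreal ((K * s)\<^sup>2)" using emeasure01 by simp
    finally show ?thesis .
  qed
  have "d M01 \<phi> P' \<le> 2 * d M01 \<phi> P + 2 * d M01 P P'"
    by (rule d_tri) (use g\<phi> gP gP' in \<open>auto simp: good_def\<close>)
  also have "\<dots> \<le> 2 * ennreal (s\<^sup>2) + 2 * ennreal ((K * s)\<^sup>2)"
    using P(2) dPP' by (intro add_mono mult_left_mono) auto
  also have "\<dots> = ennreal (2 * s\<^sup>2 + 2 * (K * s)\<^sup>2)"
    by (simp only: enn2 zero_le_power2 ennreal_plus[symmetric] mult_nonneg_nonneg zero_le_numeral)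
  also have "\<dots> < ennreal \<epsilon>"
  proof -
    have "2 * s\<^sup>2 + 2 * (K * s)\<^sup>2 = 2 * (1 + K\<^sup>2) * s\<^sup>2" by (simp add: power_mult_distrib algebra_simps)
    also have "\<dots> = \<epsilon> / 2"
    proof -
      have pK: "1 + K\<^sup>2 \<noteq> 0" using K0 by (smt (verit) zero_le_power2)
      show ?thesis unfolding s2 using pK by (simp add: field_simps)
    qed
    also have "\<dots> < \<epsilon>" using e by simp
    finally show ?thesis using e by (subst ennreal_less_iff) auto
  qed
  finally have d\<phi>: "d M01 \<phi> P' < ennreal \<epsilon>" .
  have "d (lebesgue_on A) (expo n) P' = (\<integral>\<^sup>+t. ennreal ((cmod (expo n t - P' t))\<^sup>2) * indicator A t \<partial>lebesgue)"
    unfolding d_def using A(1) by (subst nn_integral_restrict_space) auto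
  also have "\<dots> = (\<integral>\<^sup>+t. ennreal ((cmod (\<phi> t - P' t))\<^sup>2) * indicator A t \<partial>lebesgue)"
    by (intro nn_integral_cong) (auto simp: \<phi>A indicator_def)
  also have "\<dots> \<le> (\<integral>\<^sup>+t. ennreal ((cmod (\<phi> t - P' t))\<^sup>2) * indicator {0..1} t \<partial>lebesgue)"
    by (intro nn_integral_mono mult_left_mono) (use A(2) in \<open>auto simp: indicator_def\<close>)
  also have "\<dots> = d M01 \<phi> P'"
    unfolding d_def by (subst nn_integral_restrict_space) auto
  finally show ?thesis using d\<phi> tpP' by (meson order_le_less_trans)
qed

definition selP :: "real set \<Rightarrow> nat \<Rightarrow> int set \<Rightarrow> int set \<times> (int \<Rightarrow> complex) \<Rightarrow> bool" where
  "selP A k U p \<longleftrightarrow> finite (fst p) \<and> fst p \<inter> U = {} \<and>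
     d (lebesgue_on A) (expo (fst (snd (from_nat k :: nat \<times> int \<times> nat)))) (\<lambda>t. \<Sum>j\<in>fst p. snd p j * expo j t)
       < ennreal (1 / real (Suc (snd (snd (from_nat k :: nat \<times> int \<times> nat)))))"

definition sel :: "real set \<Rightarrow> nat \<Rightarrow> int set \<Rightarrow> int set \<times> (int \<Rightarrow> complex)" where
  "sel A k U = (SOME p. selP A k U p)"

primrec used :: "real set \<Rightarrow> nat \<Rightarrow> int set" where
  "used A 0 = {}"
| "used A (Suc k) = used A k \<union> fst (sel A k (used A k))"

lemma selP_ex:
  assumes A: "A \<in> sets lebesgue" "A \<subseteq> {0..1}" "emeasure lebesgue A < 1" and U: "finite U"
  shows "\<exists>p. selP A k U p"
proof -
  obtain g where g: "tp (-U) g" "d (lebesgue_on A) (expo (fst (snd (from_nat k :: nat \<times> int \<times> nat)))) g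
       < ennreal (1 / real (Suc (snd (snd (from_nat k :: nat \<times> int \<times> nat)))))"
    using removal[OF A U, of "1 / real (Suc (snd (snd (from_nat k :: nat \<times> int \<times> nat))))"] by auto
  obtain G c where G: "finite G" "G \<subseteq> -U" "g = (\<lambda>t. \<Sum>j\<in>G. c j * expo j t)" using g(1) unfolding tp_def by auto
  have "selP A k U (G, c)" unfolding selP_def using G g(2) by auto
  then show ?thesis by blast
qed

lemma used_props:
  assumes A: "A \<in> sets lebesgue" "A \<subseteq> {0..1}" "emeasure lebesgue A < 1"
  shows "finite (used A k) \<and> selP A k (used A k) (sel A k (used A k))"
proof (induction k)
  case 0
  then show ?case using selP_ex[OF A, of "{}" 0] unfolding sel_def by (auto intro: someI_ex)
next
  case (Suc k)
  then have "finite (used A (Suc k))" unfolding selP_def by simp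
  then show ?case using selP_ex[OF A, of "used A (Suc k)" "Suc k"] unfolding sel_def by (auto intro: someI_ex)
qed

lemma used_mono: "k \<le> k' \<Longrightarrow> used A k \<subseteq> used A k'"
proof (induction k' rule: dec_induct)
  case base then show ?case by simp
next
  case (step n) then show ?case by auto
qed

theorem lemma1:
  fixes A :: "real set"
  assumes "A \<in> sets lebesgue"
    and "A \<subseteq> {0..1}"
    and "emeasure lebesgue A < 1"
  shows "\<exists>Z :: nat \<Rightarrow> int set. disjoint_family Z \<and> (\<forall>j. complete_L2 A (Z j))"
proof -
  note A = assms
  define Gk where "Gk k = fst (sel A k (used A k))" for k
  define cf where "cf k = snd (sel A k (used A k))" for k
  define Z where "Z j = (\<Union>k\<in>{k. fst (from_nat k :: nat \<times> int \<times> nat) = j}. Gk k)" for j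
  have sP: "selP A k (used A k) (Gk k, cf k)" for k
    using used_props[OF A, of k] unfolding Gk_def cf_def by simp
  have Gdisj: "Gk k \<inter> Gk k' = {}" if "k < k'" for k k'
  proof -
    have "Gk k \<subseteq> used A (Suc k)" unfolding Gk_def by simp
    also have "\<dots> \<subseteq> used A k'" using that by (intro used_mono) simp
    finally show ?thesis using sP[of k'] unfolding selP_def by auto
  qed
  have disj: "disjoint_family Z"
    unfolding disjoint_family_on_def
  proof (intro ballI impI)
    fix j j' :: nat assume "j \<noteq> j'"
    show "Z j \<inter> Z j' = {}"
    proof (rule ccontr)
      assume "Z j \<inter> Z j' \<noteq> {}"
      then obtain x k k' where k: "fst (from_nat k :: nat \<times> int \<times> nat) = j" "x \<in> Gk k"
          and k': "fst (from_nat k' :: nat \<times> int \<times> nat) = j'" "x \<in> Gk k'"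
        unfolding Z_def by blast
      then have "k \<noteq> k'" using \<open>j \<noteq> j'\<close> by auto
      then have "k < k' \<or> k' < k" by arith
      then show False using Gdisj k(2) k'(2) by blast
    qed
  qed
  have compl: "complete_L2 A (Z j)" for j
  proof -
    let ?M = "lebesgue_on A"
    have ae: "apx (Z j) ?M (expo n)" for n
      unfolding apx_def
    proof (intro allI impI)
      fix \<epsilon> :: real assume e: "\<epsilon> > 0"
      obtain m :: nat where m: "1 / \<epsilon> < real m" using reals_Archimedean2 by blast
      have m1: "1 / real (Suc m) < \<epsilon>"
      proof -
        have "1 / \<epsilon> < real (Suc m)" using m by simp
        then show ?thesis using e by (simp add: field_simps)
      qed
      define k where "k = to_nat (j, n, m)"
      have fk: "(from_nat k :: nat \<times> int \<times> nat) = (j, n, m)" unfolding k_def by simp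
      have s: "finite (Gk k)" "d ?M (expo n) (\<lambda>t. \<Sum>i\<in>Gk k. cf k i * expo i t) < ennreal (1 / real (Suc m))"
        using sP[of k] unfolding selP_def fk by auto
      have "Gk k \<subseteq> Z j" unfolding Z_def by (rule UN_upper) (simp add: fk)
      then have "tp (Z j) (\<lambda>t. \<Sum>i\<in>Gk k. cf k i * expo i t)" unfolding tp_def using s(1) by blast
      moreover have "d ?M (expo n) (\<lambda>t. \<Sum>i\<in>Gk k. cf k i * expo i t) < ennreal \<epsilon>"
        using s(2) m1 e by (meson ennreal_lessI order_less_trans)
      ultimately show "\<exists>g. tp (Z j) g \<and> d ?M (expo n) g < ennreal \<epsilon>" by blast
    qed
    have atp: "apx (Z j) ?M g" if tg: "tp UNIV g" for g
    proof -
      obtain G c where G: "finite G" "g = (\<lambda>t. \<Sum>k\<in>G. c k * expo k t)" using tg unfolding tp_def by auto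
      have "apx (Z j) ?M (\<lambda>t. \<Sum>k\<in>G. c k * expo k t)"
      proof (rule apx_sum[OF A(1) G(1)])
        fix k
        have me: "expo k \<in> borel_measurable ?M" by (rule tp_meas[OF tp_expo[of k UNIV] A(1)]) simp
        show "(\<lambda>t. c k * expo k t) \<in> borel_measurable ?M" using me by measurable
        show "apx (Z j) ?M (\<lambda>t. c k * expo k t)" by (rule apx_scale[OF A(1) me ae])
      qed
      then show ?thesis using G(2) by simp
    qed
    show ?thesis
      unfolding complete_L2_def
    proof (rule allI, rule impI)
      fix f :: "real \<Rightarrow> complex"
      assume f: "f \<in> borel_measurable ?M \<and> (\<integral>\<^sup>+ t. ennreal ((cmod (f t))\<^sup>2) \<partial>?M) < \<infinity>"
      have af: "apx UNIV ?M f" by (rule L2_apx[OF A(1,2)]) (use f in auto)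
      have "apx (Z j) ?M f"
      proof (rule apx_limit[OF A(1)])
        show "f \<in> borel_measurable ?M" using f by simp
        fix \<epsilon> :: real assume e: "\<epsilon> > 0"
        obtain g where g: "tp UNIV g" "d ?M f g < ennreal \<epsilon>" using af e unfolding apx_def by blast
        show "\<exists>g. g \<in> borel_measurable ?M \<and> apx (Z j) ?M g \<and> d ?M f g < ennreal \<epsilon>"
          using g tp_meas[OF g(1) A(1)] atp[OF g(1)] by blast
      qed
      then show "\<forall>\<epsilon>>0. \<exists>F c. finite F \<and> F \<subseteq> Z j \<and>
          (\<integral>\<^sup>+ t. ennreal ((cmod (f t - (\<Sum>n\<in>F. c n * expo n t)))\<^sup>2) \<partial>?M) < ennreal \<epsilon>"
        unfolding apx_def tp_def d_def by fastforce
    qed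
  qed
  show ?thesis using disj compl by blast
qed

end
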